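(* Let $\Gamma$ be a Shilla distance-regular graph with $b(\Gamma)=b$. Then: (i) $c_2$ divides $(b-1)a_3b_2$; (ii) $c_2$ divides $(b-1)ba_3(a_3+1)$; (iii) $c_2$ divides $b(a_3+1)b_2$; (iv) $c_2$ divides $(b+a_3)b_2$, and $(b+a_3)b_2\geq (1+a_3)c_2$, with equality if and only if $p^3_{33}=0$; (v) $c_2$ divides $(b-1)bb_2$.
   Context: A connected graph $\Gamma$ of diameter $D$ is distance-regular if there are integers $b_i,c_i$ ($0\le i\le D$) such that for any two vertices $x,y$ at distance $i$, exactly $c_i$ neighbours of $y$ are at distance $i-1$ from $x$ and exactly $b_i$ neighbours of $y$ are at distance $i+1$ from $x$. Then $\Gamma$ is regular of valency $k=b_0$, and $a_i:=k-b_i-c_i$. For vertices $x,y$ at distance $i$, $p^i_{jl}$ denotes the number of vertices $z$ with $d(x,z)=j$ and $d(y,z)=l$ (independent of the choice of $x,y$). The eigenvalues of $\Gamma$ are those of its adjacency matrix; $\Gamma$ has exactly $D+1$ distinct eigenvalues $k=\theta_0>\theta_1>\dots>\theta_D$. A Shilla distance-regular graph is a distance-regular graph of diameter $3$ whose second largest eigenvalue satisfies $\theta_1=a_3$. For such graphs $k=(a_3-a_1)a_3$, and one defines $b(\Gamma):=a_3-a_1=k/a_3$. *)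

theory Defs
  imports Complex_Main
begin

definition simple_graph :: "'a set \<Rightarrow> ('a \<Rightarrow> 'a \<Rightarrow> bool) \<Rightarrow> bool" where
  "simple_graph V E \<longleftrightarrow> finite V \<and> V \<noteq> {} \<and>
     (\<forall>x y. E x y \<longrightarrow> x \<in> V \<and> y \<in> V) \<and>
     (\<forall>x y. E x y \<longrightarrow> E y x) \<and> (\<forall>x. \<not> E x x)"

definition gdist :: "('a \<Rightarrow> 'a \<Rightarrow> bool) \<Rightarrow> 'a \<Rightarrow> 'a \<Rightarrow> nat" where
  "gdist E x y = (LEAST n. (E ^^ n) x y)"

definition connected_graph :: "'a set \<Rightarrow> ('a \<Rightarrow> 'a \<Rightarrow> bool) \<Rightarrow> bool" where
  "connected_graph V E \<longleftrightarrow> simple_graph V E \<and> (\<forall>x\<in>V. \<forall>y\<in>V. \<exists>n. (E ^^ n) x y)"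

definition diameter :: "'a set \<Rightarrow> ('a \<Rightarrow> 'a \<Rightarrow> bool) \<Rightarrow> nat" where
  "diameter V E = Max {gdist E x y | x y. x \<in> V \<and> y \<in> V}"

definition distance_regular ::
  "'a set \<Rightarrow> ('a \<Rightarrow> 'a \<Rightarrow> bool) \<Rightarrow> nat \<Rightarrow> (nat \<Rightarrow> nat) \<Rightarrow> (nat \<Rightarrow> nat) \<Rightarrow> bool" where
  "distance_regular V E D b c \<longleftrightarrow> connected_graph V E \<and> diameter V E = D \<and>
     (\<forall>i \<le> D. \<forall>x\<in>V. \<forall>y\<in>V. gdist E x y = i \<longrightarrow>
        card {z\<in>V. E y z \<and> gdist E x z + 1 = i} = c i \<and>
        card {z\<in>V. E y z \<and> gdist E x z = i + 1} = b i)"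

definition a_num :: "(nat \<Rightarrow> nat) \<Rightarrow> (nat \<Rightarrow> nat) \<Rightarrow> nat \<Rightarrow> int" where
  "a_num b c i = int (b 0) - int (b i) - int (c i)"

text \<open>p^h_{jl} for a pair x, y (the graph being distance-regular, it depends only on d(x,y)).\<close>
definition p_num :: "'a set \<Rightarrow> ('a \<Rightarrow> 'a \<Rightarrow> bool) \<Rightarrow> 'a \<Rightarrow> 'a \<Rightarrow> nat \<Rightarrow> nat \<Rightarrow> nat" where
  "p_num V E x y j l = card {z\<in>V. gdist E x z = j \<and> gdist E y z = l}"

definition is_eigenvalue :: "'a set \<Rightarrow> ('a \<Rightarrow> 'a \<Rightarrow> bool) \<Rightarrow> real \<Rightarrow> bool" where
  "is_eigenvalue V E \<theta> \<longleftrightarrow> (\<exists>f :: 'a \<Rightarrow> real. (\<exists>x\<in>V. f x \<noteq> 0) \<and>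
     (\<forall>x\<in>V. (\<Sum>y\<in>{y\<in>V. E x y}. f y) = \<theta> * f x))"

definition eigenvalues :: "'a set \<Rightarrow> ('a \<Rightarrow> 'a \<Rightarrow> bool) \<Rightarrow> real set" where
  "eigenvalues V E = {\<theta>. is_eigenvalue V E \<theta>}"

definition second_eigenvalue :: "'a set \<Rightarrow> ('a \<Rightarrow> 'a \<Rightarrow> bool) \<Rightarrow> real" where
  "second_eigenvalue V E = Max (eigenvalues V E - {Max (eigenvalues V E)})"

definition shilla :: "'a set \<Rightarrow> ('a \<Rightarrow> 'a \<Rightarrow> bool) \<Rightarrow> (nat \<Rightarrow> nat) \<Rightarrow> (nat \<Rightarrow> nat) \<Rightarrow> bool" where
  "shilla V E b c \<longleftrightarrow> distance_regular V E 3 b c \<and>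
     second_eigenvalue V E = of_int (a_num b c 3)"

end

theory Submission
  imports Defs "HOL-Computational_Algebra.Polynomial"
begin

lemma poly_quart: "poly ([:-a3, 1:] * ([:-a2, 1:] * [:-k, -a1, 1:] - [:0, b1 * c2:]) - smult (b2 * c3) [:-k, -a1, 1:]) (t::real)
  = (t - a3) * ((t - a2) * (t*t - a1 * t - k) - b1 * c2 * t) - b2 * c3 * (t*t - a1 * t - k)"
  by (simp add: algebra_simps)

lemma quart_a3: "(a3 - a3) * ((a3 - a2) * (a3*a3 - a1 * a3 - k) - b1 * c2 * a3) - b2 * c3 * (a3*a3 - a1 * a3 - k) = - (b2 * c3) * (a3 * a3 - a1 * a3 - (k::real))"
  by simp

lemma alg_all:
  fixes K bb a A1 B1 A2 B2 C2 C3 k2x k2y k3x p22 p32 p33 :: int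
  assumes h: "K = bb*a" "A1 = a - bb" "B1 = K - 1 - A1" "A2 = K - B2 - C2" "C3 = K - a"
   "k2x*C2 = K*B1" "k2y*C2 = K*B1" "k3x*C3 = k2x*B2" "C2*p22 = C3*(A2 + a - A1)"
   "k3x = 1 + a + p32 + p33" "k2y = C3 + p22 + p32"
   and c3: "C3 \<noteq> 0"
  shows "(bb + a)*B2 = C2*(p33+1+a)"
    and "bb*(a+1)*B2 = C2*k3x"
    and "(bb-1)*bb*a*(a+1) = C2*k2x"
    and "(bb-1)*a*B2 = C2*(k2x - p22 - C3)"
    and "(bb-1)*bb*B2 = C2*((bb-1)*(p33+1+a) - (k2x - p22 - C3))"
proof -
  have "C3*(C2*(p33+1+a) - (bb+a)*B2) = 0" using h by algebra
  then show 1: "(bb + a)*B2 = C2*(p33+1+a)" using c3 by simp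
  have "C3*(C2*k3x - bb*(a+1)*B2) = 0" using h by algebra
  then show "bb*(a+1)*B2 = C2*k3x" using c3 by simp
  show "(bb-1)*bb*a*(a+1) = C2*k2x" using h by algebra
  show 4: "(bb-1)*a*B2 = C2*(k2x - p22 - C3)" using h by algebra
  show "(bb-1)*bb*B2 = C2*((bb-1)*(p33+1+a) - (k2x - p22 - C3))" using 1 4 by algebra
qed

locale drg3 =
  fixes V :: "'a set" and E :: "'a \<Rightarrow> 'a \<Rightarrow> bool" and b c :: "nat \<Rightarrow> nat"
  assumes drg: "distance_regular V E 3 b c"
begin

abbreviation d where "d \<equiv> gdist E"

lemma sg: "simple_graph V E"
  using drg unfolding distance_regular_def connected_graph_def by auto

lemma finV: "finite V" using sg unfolding simple_graph_def by auto
lemma Esym: "E x y \<Longrightarrow> E y x" using sg unfolding simple_graph_def by auto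
lemma Eirr: "\<not> E x x" using sg unfolding simple_graph_def by auto
lemma EV: "E x y \<Longrightarrow> x \<in> V \<and> y \<in> V" using sg unfolding simple_graph_def by auto
lemma conn: "x \<in> V \<Longrightarrow> y \<in> V \<Longrightarrow> \<exists>n. (E ^^ n) x y"
  using drg unfolding distance_regular_def connected_graph_def by auto

lemma pow_sym: "(E ^^ n) x y \<Longrightarrow> (E ^^ n) y x"
proof (induction n arbitrary: y)
  case 0 then show ?case by auto
next
  case (Suc n)
  from Suc.prems obtain u where "(E ^^ n) x u" "E u y" by (rule relpowp_Suc_E)
  then show ?case using Suc.IH Esym by (meson relpowp_Suc_I2)
qed

lemma d_sym: "d x y = d y x"
  unfolding gdist_def using pow_sym by metis

lemma d_path: "x \<in> V \<Longrightarrow> y \<in> V \<Longrightarrow> (E ^^ (d x y)) x y"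
  unfolding gdist_def using conn by (metis LeastI_ex)

lemma d_le: "(E ^^ n) x y \<Longrightarrow> d x y \<le> n"
  unfolding gdist_def by (rule Least_le)

lemma d_refl: "d x x = 0"
  using d_le[of 0 x x] by auto

lemma d_eq0: "x \<in> V \<Longrightarrow> y \<in> V \<Longrightarrow> d x y = 0 \<Longrightarrow> x = y"
  using d_path[of x y] by auto

lemma d_adj: assumes "E x y" shows "d x y = 1"
proof -
  have "d x y \<le> 1" using d_le[of 1 x y] assms by auto
  moreover have "d x y \<noteq> 0" using d_eq0[of x y] EV[OF assms] Eirr assms by auto
  ultimately show ?thesis by auto
qed

lemma d_tri: "x \<in> V \<Longrightarrow> y \<in> V \<Longrightarrow> z \<in> V \<Longrightarrow> d x z \<le> d x y + d y z"
  using d_le relpowp_trans d_path by metis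

lemma d_le3: assumes "x \<in> V" "y \<in> V" shows "d x y \<le> 3"
proof -
  have "diameter V E = 3" using drg unfolding distance_regular_def by auto
  moreover have "finite {gdist E x y | x y. x \<in> V \<and> y \<in> V}"
  proof -
    have "{gdist E x y | x y. x \<in> V \<and> y \<in> V} = (\<lambda>(x,y). gdist E x y) ` (V \<times> V)" by auto
    then show ?thesis using finV by auto
  qed
  ultimately show ?thesis unfolding diameter_def using assms
    by (metis (mono_tags, lifting) Max_ge mem_Collect_eq)
qed

lemma nb1: "x \<in> V \<Longrightarrow> E y z \<Longrightarrow> d x z \<le> d x y + 1"
  using d_tri[of x y z] d_adj EV by fastforce
lemma nb2: "x \<in> V \<Longrightarrow> E y z \<Longrightarrow> d x y \<le> d x z + 1"
  using d_tri[of x z y] d_adj[of z y] EV Esym by fastforce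

lemma cC: "x \<in> V \<Longrightarrow> y \<in> V \<Longrightarrow> d x y = i \<Longrightarrow> i \<le> 3 \<Longrightarrow>
   card {z\<in>V. E y z \<and> d x z + 1 = i} = c i"
  using drg unfolding distance_regular_def by blast
lemma cB: "x \<in> V \<Longrightarrow> y \<in> V \<Longrightarrow> d x y = i \<Longrightarrow> i \<le> 3 \<Longrightarrow>
   card {z\<in>V. E y z \<and> d x z = i + 1} = b i"
  using drg unfolding distance_regular_def by blast

lemma deg: assumes "y \<in> V" shows "card {z\<in>V. E y z} = b 0"
proof -
  have "{z\<in>V. E y z} = {z\<in>V. E y z \<and> d y z = 0 + 1}" using d_adj by auto
  then show ?thesis using cB[of y y 0] assms d_refl by auto
qed

lemma cA: assumes "x \<in> V" "y \<in> V" "d x y = i" "i \<le> 3"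
  shows "int (card {z\<in>V. E y z \<and> d x z = i}) = a_num b c i"
proof -
  let ?S1 = "{z\<in>V. E y z \<and> d x z + 1 = i}"
  let ?S2 = "{z\<in>V. E y z \<and> d x z = i}"
  let ?S3 = "{z\<in>V. E y z \<and> d x z = i + 1}"
  have "{z\<in>V. E y z} = ?S1 \<union> ?S2 \<union> ?S3"
    using nb1[OF assms(1), of y] nb2[OF assms(1), of y] assms(3) by fastforce
  moreover have "card (?S1 \<union> ?S2 \<union> ?S3) = card ?S1 + card ?S2 + card ?S3"
  proof -
    have "card (?S1 \<union> ?S2) = card ?S1 + card ?S2"
      by (rule card_Un_disjoint) (use finV in auto)
    moreover have "card (?S1 \<union> ?S2 \<union> ?S3) = card (?S1 \<union> ?S2) + card ?S3"
      by (rule card_Un_disjoint) (use finV in auto)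
    ultimately show ?thesis by simp
  qed
  ultimately have "b 0 = c i + card ?S2 + b i"
    using deg[OF assms(2)] cC[OF assms] cB[OF assms] by auto
  then show ?thesis unfolding a_num_def by auto
qed

lemma exists3: "\<exists>x\<in>V. \<exists>y\<in>V. d x y = 3"
proof -
  let ?S = "{gdist E x y | x y. x \<in> V \<and> y \<in> V}"
  have "diameter V E = 3" using drg unfolding distance_regular_def by auto
  moreover have "?S = (\<lambda>(x,y). gdist E x y) ` (V \<times> V)" by auto
  then have "finite ?S" using finV by auto
  moreover have "V \<noteq> {}" using sg unfolding simple_graph_def by auto
  then have "?S \<noteq> {}" by auto
  ultimately have "Max ?S \<in> ?S" by (intro Max_in) 
  moreover have "Max ?S = 3" using \<open>diameter V E = 3\<close> unfolding diameter_def by simp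
  ultimately have "3 \<in> ?S" by simp
  then show ?thesis by auto
qed

lemma path3: assumes "x \<in> V" "y \<in> V" "d x y = 3"
  obtains v1 v2 where "E x v1" "E v1 v2" "E v2 y" "d x v1 = 1" "d x v2 = 2"
proof -
  have "(E ^^ Suc (Suc (Suc 0))) x y" using d_path[OF assms(1,2)] assms(3) by (simp add: numeral_eq_Suc)
  then obtain v1 where 1: "E x v1" "(E ^^ Suc (Suc 0)) v1 y" by (meson relpowp_Suc_E2)
  then obtain v2 where 2: "E v1 v2" "(E ^^ Suc 0) v2 y" by (meson relpowp_Suc_E2)
  have "d x v2 \<le> 2"
  proof -
    have "(E ^^ Suc (Suc 0)) x v2" using 1 2 by (meson relpowp_Suc_I2 relpowp_Suc_I relpowp_0_I)
    then show ?thesis using d_le by (metis numeral_2_eq_2)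
  qed
  moreover have "E v2 y" using 2(2) by (simp only: relpowp_Suc_0)
  then have "d x y \<le> d x v2 + 1" using nb1[OF assms(1), of v2 y] by auto
  ultimately have "d x v2 = 2" using assms by auto
  then show ?thesis using that[OF 1(1) 2(1) \<open>E v2 y\<close> d_adj[OF 1(1)]] by simp
qed

lemma c0: "c 0 = 0"
proof -
  obtain x where "x \<in> V" using exists3 by auto
  then show ?thesis using cC[of x x 0] d_refl by auto
qed

lemma cardS: "x \<in> {z\<in>V. P z} \<Longrightarrow> card {z\<in>V. P z} \<ge> 1"
proof -
  assume a: "x \<in> {z\<in>V. P z}"
  have "finite {z\<in>V. P z}" using finV by simp
  then have "card {z\<in>V. P z} \<noteq> 0" using a by (metis card_0_eq empty_iff)
  then show ?thesis by simp
qed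

lemma basics: "c 1 = 1 \<and> b 3 = 0 \<and> b 0 \<ge> 1 \<and> b 1 \<ge> 1 \<and> b 2 \<ge> 1 \<and> c 2 \<ge> 1 \<and> c 3 \<ge> 1"
proof -
  obtain x y where xy: "x \<in> V" "y \<in> V" "d x y = 3" using exists3 by auto
  obtain v1 v2 where p: "E x v1" "E v1 v2" "E v2 y" "d x v1 = 1" "d x v2 = 2"
    using path3[OF xy] by blast
  have V: "v1 \<in> V" "v2 \<in> V" using p EV by auto
  have "{z\<in>V. E v1 z \<and> d x z + 1 = 1} = {x}"
  proof (intro equalityI subsetI)
    fix z assume "z \<in> {z\<in>V. E v1 z \<and> d x z + 1 = 1}"
    then have "z \<in> V" "d x z = 0" by auto
    then show "z \<in> {x}" using d_eq0[OF xy(1)] by blast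
  next
    fix z assume "z \<in> {x}"
    then show "z \<in> {z\<in>V. E v1 z \<and> d x z + 1 = 1}" using xy(1) Esym[OF p(1)] d_refl[of x] by simp
  qed
  then have c1: "c 1 = 1" using cC[OF xy(1) V(1) p(4)] by simp
  have e3: "{z\<in>V. E y z \<and> d x z = 3 + 1} = {}"
  proof (intro equalityI subsetI)
    fix z assume "z \<in> {z\<in>V. E y z \<and> d x z = 3 + 1}"
    then have "z \<in> V" "d x z = 4" by auto
    then show "z \<in> {}" using d_le3[OF xy(1), of z] by simp
  qed simp
  have b3: "b 3 = 0" using cB[OF xy] unfolding e3 by simp
  have "v1 \<in> {z\<in>V. E x z}" using p V by simp
  then have "card {z\<in>V. E x z} \<ge> 1" by (rule cardS)
  then have b0: "b 0 \<ge> 1" using deg[OF xy(1)] by simp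
  have "v2 \<in> {z\<in>V. E v1 z \<and> d x z = 1 + 1}" using p V by simp
  then have "card {z\<in>V. E v1 z \<and> d x z = 1 + 1} \<ge> 1" by (rule cardS)
  then have b1: "b 1 \<ge> 1" using cB[OF xy(1) V(1) p(4)] by simp
  have "y \<in> {z\<in>V. E v2 z \<and> d x z = 2 + 1}" using p xy by simp
  then have "card {z\<in>V. E v2 z \<and> d x z = 2 + 1} \<ge> 1" by (rule cardS)
  then have b2: "b 2 \<ge> 1" using cB[OF xy(1) V(2) p(5)] by simp
  have "v1 \<in> {z\<in>V. E v2 z \<and> d x z + 1 = 2}" using p V Esym[OF p(2)] by simp
  then have "card {z\<in>V. E v2 z \<and> d x z + 1 = 2} \<ge> 1" by (rule cardS)
  then have c2: "c 2 \<ge> 1" using cC[OF xy(1) V(2) p(5)] by simp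
  have "v2 \<in> {z\<in>V. E y z \<and> d x z + 1 = 3}" using p V Esym[OF p(3)] by simp
  then have "card {z\<in>V. E y z \<and> d x z + 1 = 3} \<ge> 1" by (rule cardS)
  then have c3: "c 3 \<ge> 1" using cC[OF xy] by simp
  show ?thesis using c1 b3 b0 b1 b2 c2 c3 by simp
qed

definition Nr :: "nat \<Rightarrow> nat \<Rightarrow> real" where
  "Nr j i = (if i + 1 = j then real (c j) else if i = j + 1 then real (b j)
     else if i = j then real_of_int (a_num b c j) else 0)"

lemma cN: assumes "x \<in> V" "w \<in> V" "d x w = j"
  shows "real (card {z\<in>V. E w z \<and> d x z = i}) = Nr j i"
proof -
  have j3: "j \<le> 3" using d_le3 assms by auto
  consider "i + 1 = j" | "i = j + 1" | "i = j" | "i + 1 \<noteq> j \<and> i \<noteq> j + 1 \<and> i \<noteq> j" by blast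
  then show ?thesis
  proof cases
    case 1
    then have "{z\<in>V. E w z \<and> d x z = i} = {z\<in>V. E w z \<and> d x z + 1 = j}" by auto
    then show ?thesis using cC[OF assms j3] 1 unfolding Nr_def by auto
  next
    case 2
    then show ?thesis using cB[OF assms j3] unfolding Nr_def by auto
  next
    case 3
    then show ?thesis using cA[OF assms j3] unfolding Nr_def by auto
  next
    case 4
    then have "{z\<in>V. E w z \<and> d x z = i} = {}"
      using nb1[OF assms(1), of w] nb2[OF assms(1), of w] assms(3) by fastforce
    then show ?thesis using 4 unfolding Nr_def by (metis card.empty of_nat_0)
  qed
qed

lemma group3: assumes "finite S" "S \<subseteq> V" "x \<in> V"
  shows "(\<Sum>w\<in>S. F w) = (\<Sum>j\<in>{..3::nat}. \<Sum>w\<in>{w\<in>S. d x w = j}. F w)"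
proof -
  have "d x ` S \<subseteq> {..3}" using d_le3 assms by auto
  then show ?thesis using sum.group[OF assms(1), of "{..3}" "d x" F] by auto
qed

lemma sum4: "(\<Sum>j\<in>{..3::nat}. g j) = g 0 + g 1 + g 2 + g 3"
proof -
  have "{..3::nat} = {0,1,2,3}" by auto
  then show ?thesis by (simp add: algebra_simps)
qed

lemma groupN: assumes "x \<in> V" "z \<in> V"
  shows "(\<Sum>w\<in>{w\<in>V. E z w}. g (d x w)) = (\<Sum>i\<in>{..3::nat}. g i * Nr (d x z) i)"
proof -
  have "(\<Sum>w\<in>{w\<in>V. E z w}. g (d x w)) = (\<Sum>i\<in>{..3::nat}. \<Sum>w\<in>{w\<in>{w\<in>V. E z w}. d x w = i}. g (d x w))"
    using group3[of "{w\<in>V. E z w}" x "\<lambda>w. g (d x w)"] finV assms by auto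
  also have "\<dots> = (\<Sum>i\<in>{..3::nat}. \<Sum>w\<in>{w\<in>V. E z w \<and> d x w = i}. g i)"
    by (intro sum.cong) auto
  also have "\<dots> = (\<Sum>i\<in>{..3::nat}. g i * Nr (d x z) i)"
    using cN[OF assms refl] by (intro sum.cong) (auto simp: mult.commute)
  finally show ?thesis .
qed

abbreviation "K \<equiv> real (b 0)"
abbreviation "A j \<equiv> real_of_int (a_num b c j)"
abbreviation "B j \<equiv> real (b j)"
abbreviation "C j \<equiv> real (c j)"

lemma Avals: "A 0 = 0" "A 1 = K - B 1 - 1" "A 2 = K - B 2 - C 2" "A 3 = K - C 3"
  using basics c0 unfolding a_num_def by auto

definition Pp :: "real \<Rightarrow> real" where
  "Pp = (\<lambda>t. (t - A 3) * ((t - A 2) * (t*t - A 1 * t - K) - B 1 * C 2 * t) - B 2 * C 3 * (t*t - A 1 * t - K))"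

lemma Nr0: "Nr 0 0 = A 0" "Nr 1 0 = C 1" "Nr 2 0 = 0" "Nr 3 0 = 0"
  "Nr 0 1 = B 0" "Nr 1 1 = A 1" "Nr 2 1 = C 2" "Nr 3 1 = 0"
  "Nr 0 2 = 0" "Nr 1 2 = B 1" "Nr 2 2 = A 2" "Nr 3 2 = C 3"
  "Nr 0 3 = 0" "Nr 1 3 = 0" "Nr 2 3 = B 2" "Nr 3 3 = A 3"
  unfolding Nr_def by auto

lemma d1_iff: "x \<in> V \<Longrightarrow> z \<in> V \<Longrightarrow> d x z = 1 \<longleftrightarrow> E x z"
  using d_adj d_path[of x z] by fastforce

lemma eig_P: assumes "is_eigenvalue V E \<theta>" shows "Pp \<theta> = 0"
proof -
  obtain f x where x: "x \<in> V" "f x \<noteq> 0" and eq: "\<And>z. z \<in> V \<Longrightarrow> (\<Sum>y\<in>{y\<in>V. E z y}. f y) = \<theta> * f z"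
    using assms unfolding is_eigenvalue_def by blast
  define u where "u i = (\<Sum>z\<in>{z\<in>V. d x z = i}. f z)" for i
  have key: "\<theta> * u i = (\<Sum>j\<in>{..3::nat}. Nr j i * u j)" for i
  proof -
    have "\<theta> * u i = (\<Sum>z\<in>{z\<in>V. d x z = i}. \<theta> * f z)" unfolding u_def by (simp add: sum_distrib_left)
    also have "\<dots> = (\<Sum>z\<in>{z\<in>V. d x z = i}. \<Sum>y\<in>{y\<in>V. E z y}. f y)" using eq by simp
    also have "\<dots> = (\<Sum>z\<in>{z\<in>V. d x z = i}. \<Sum>y\<in>V. if E z y then f y else 0)"
      using finV by (simp add: sum.inter_filter)
    also have "\<dots> = (\<Sum>y\<in>V. \<Sum>z\<in>{z\<in>V. d x z = i}. if E z y then f y else 0)"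
      by (rule sum.swap)
    also have "\<dots> = (\<Sum>y\<in>V. f y * real (card {z\<in>V. E y z \<and> d x z = i}))"
    proof (rule sum.cong)
      fix y assume "y \<in> V"
      have "(\<Sum>z\<in>{z\<in>V. d x z = i}. if E z y then f y else 0) = (\<Sum>z\<in>{z\<in>{z\<in>V. d x z = i}. E z y}. f y)"
        by (rule sum.inter_filter[symmetric]) (use finV in simp)
      also have "{z\<in>{z\<in>V. d x z = i}. E z y} = {z\<in>V. E y z \<and> d x z = i}"
        using Esym by blast
      finally show "(\<Sum>z\<in>{z\<in>V. d x z = i}. if E z y then f y else 0) = f y * real (card {z\<in>V. E y z \<and> d x z = i})"
        by simp
    qed simp
    also have "\<dots> = (\<Sum>y\<in>V. f y * Nr (d x y) i)"
      using cN[OF x(1) _ refl] by (intro sum.cong) auto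
    also have "\<dots> = (\<Sum>j\<in>{..3::nat}. \<Sum>y\<in>{y\<in>V. d x y = j}. f y * Nr (d x y) i)"
      using group3[of V x "\<lambda>y. f y * Nr (d x y) i"] finV x by auto
    also have "\<dots> = (\<Sum>j\<in>{..3::nat}. Nr j i * u j)"
      unfolding u_def by (intro sum.cong) (auto simp: sum_distrib_left mult.commute)
    finally show ?thesis .
  qed
  have e0: "\<theta> * u 0 = u 1" using key[of 0] Nr0 basics Avals unfolding sum4 by simp
  have e1: "\<theta> * u 1 = K * u 0 + A 1 * u 1 + C 2 * u 2" using key[of 1] Nr0 unfolding sum4 by simp
  have e2: "\<theta> * u 2 = B 1 * u 1 + A 2 * u 2 + C 3 * u 3" using key[of 2] Nr0 unfolding sum4 by simp
  have e3: "\<theta> * u 3 = B 2 * u 2 + A 3 * u 3" using key[of 3] Nr0 unfolding sum4 by simp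
  have u0: "u 0 = f x"
  proof -
    have "{z\<in>V. d x z = 0} = {x}"
    proof (intro equalityI subsetI)
      fix z assume "z \<in> {z\<in>V. d x z = 0}"
      then show "z \<in> {x}" using d_eq0[OF x(1), of z] by auto
    qed (use x(1) d_refl in auto)
    then show ?thesis unfolding u_def by simp
  qed
  have h1: "C 2 * u 2 = (\<theta>*\<theta> - A 1 * \<theta> - K) * u 0" using e0 e1 by (simp add: algebra_simps)
  define Q where "Q = \<theta>*\<theta> - A 1 * \<theta> - K"
  have h1': "Q * u 0 = C 2 * u 2" using h1 unfolding Q_def by simp
  have e0': "\<theta> * u 0 = u 1" by (rule e0)
  have e2': "(\<theta> - A 2) * u 2 - B 1 * u 1 = C 3 * u 3" using e2 unfolding left_diff_distrib by linarith
  have e3': "(\<theta> - A 3) * u 3 - B 2 * u 2 = 0" using e3 unfolding left_diff_distrib by linarith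
  have "Pp \<theta> * u 0 = (\<theta> - A 3) * ((\<theta> - A 2) * (Q * u 0) - B 1 * C 2 * (\<theta> * u 0)) - B 2 * C 3 * (Q * u 0)"
    unfolding Pp_def Q_def by (simp add: algebra_simps)
  also have "\<dots> = (\<theta> - A 3) * (C 2 * ((\<theta> - A 2) * u 2 - B 1 * u 1)) - B 2 * C 3 * (C 2 * u 2)"
    unfolding h1' e0' by (simp add: algebra_simps)
  also have "\<dots> = C 2 * C 3 * ((\<theta> - A 3) * u 3 - B 2 * u 2)"
    unfolding e2' by (simp add: algebra_simps)
  also have "\<dots> = 0" unfolding e3' by simp
  finally show ?thesis using x(2) u0 by simp
qed

lemma root_eig: assumes "Pp \<theta> = 0" shows "is_eigenvalue V E \<theta>"
proof -
  obtain p where p: "p \<in> V" using exists3 by auto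
  define Q where "Q = \<theta>*\<theta> - A 1 * \<theta> - K"
  define W where "W n = (if n = 0 then K * B 1 * B 2 else if n = 1 then \<theta> * B 1 * B 2
     else if n = 2 then B 2 * Q else (\<theta> - A 2) * Q - C 2 * B 1 * \<theta>)" for n :: nat
  have "\<forall>z\<in>V. (\<Sum>y\<in>{y\<in>V. E z y}. W (d p y)) = \<theta> * W (d p z)"
  proof
    fix z assume z: "z \<in> V"
    have "(\<Sum>y\<in>{y\<in>V. E z y}. W (d p y)) = (\<Sum>i\<in>{..3::nat}. W i * Nr (d p z) i)"
      by (rule groupN[OF p z])
    also have "\<dots> = \<theta> * W (d p z)"
    proof -
      have "d p z \<le> 3" using d_le3 p z by auto
      then consider "d p z = 0" | "d p z = 1" | "d p z = 2" | "d p z = 3" by linarith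
      then show ?thesis
      proof cases
        case 1 then show ?thesis unfolding sum4 W_def using Nr0 Avals by (simp add: algebra_simps)
      next
        case 2 then show ?thesis unfolding sum4 W_def Q_def using Nr0 basics by (simp add: algebra_simps)
      next
        case 3 then show ?thesis unfolding sum4 W_def Q_def using Nr0 by (simp add: algebra_simps)
      next
        case 4
        have "W 2 * C 3 + W 3 * A 3 - \<theta> * W 3 = - Pp \<theta>"
          unfolding W_def Q_def Pp_def by (simp add: algebra_simps)
        then show ?thesis using 4 assms unfolding sum4 using Nr0 by simp
      qed
    qed
    finally show "(\<Sum>y\<in>{y\<in>V. E z y}. W (d p y)) = \<theta> * W (d p z)" .
  qed
  moreover have "W (d p p) \<noteq> 0" using basics unfolding W_def d_refl by simp
  ultimately show ?thesis unfolding is_eigenvalue_def using p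
    by (intro exI[of _ "\<lambda>z. W (d p z)"]) blast
qed

lemma a3_nonneg: "A 3 \<ge> 0"
proof -
  obtain x y where xy: "x \<in> V" "y \<in> V" "d x y = 3" using exists3 by auto
  have "a_num b c 3 \<ge> 0" using cA[OF xy] by linarith
  then show ?thesis by simp
qed

lemma K_eig: "is_eigenvalue V E K"
proof -
  have "\<forall>z\<in>V. (\<Sum>y\<in>{y\<in>V. E z y}. (1::real)) = K * 1" using deg by simp
  moreover obtain p where "p \<in> V" using exists3 by auto
  ultimately show ?thesis unfolding is_eigenvalue_def by (intro exI[of _ "\<lambda>_. 1"]) auto
qed

lemma Pp_cont: "isCont Pp t"
  unfolding Pp_def by (intro continuous_intros)

lemma neg_root: "\<exists>s. Pp s > 0" "\<exists>r. r < 0 \<and> Pp r = 0"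
proof -
  have bc: "B 1 \<ge> 1" "B 2 \<ge> 1" "C 2 \<ge> 1" "C 3 \<ge> 1" "K \<ge> 1" using basics by auto
  define s where "s = 2 + \<bar>A 1\<bar> + \<bar>A 2\<bar> + \<bar>A 3\<bar> + K + B 1 * C 2 + B 2 * C 3"
  have bc2: "B 1 * C 2 \<ge> 0" "B 2 * C 3 \<ge> 0" using bc by auto
  have s1: "s \<ge> 1" unfolding s_def using bc2 bc by linarith
  define q where "q = s*s + A 1 * s - K"
  have X: "s + A 1 - 1 \<ge> K + 1" unfolding s_def using bc2 by linarith
  have "1 * (s + A 1 - 1) \<le> s * (s + A 1 - 1)"
    by (rule mult_right_mono) (use s1 X bc in auto)
  then have qs: "q \<ge> s + 1" unfolding q_def using X by (simp add: algebra_simps)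
  have q0: "q > 0" using qs s1 by linarith
  have "B 1 * C 2 * s \<le> B 1 * C 2 * q" by (rule mult_left_mono) (use qs bc2 in auto)
  moreover have sA2: "s + A 2 - B 1 * C 2 \<ge> B 2 * C 3 + 2"
    unfolding s_def using abs_ge_minus_self[of "A 2"] by linarith
  have "(B 2 * C 3 + 2) * q \<le> (s + A 2 - B 1 * C 2) * q"
    by (rule mult_right_mono) (use q0 sA2 in auto)
  ultimately have inner: "(s + A 2) * q - B 1 * C 2 * s \<ge> B 2 * C 3 * q + 2 * q"
    by (simp add: algebra_simps)
  define inn where "inn = (s + A 2) * q - B 1 * C 2 * s"
  have inner': "inn \<ge> B 2 * C 3 * q + 2 * q" using inner unfolding inn_def .
  have bq: "B 2 * C 3 * q \<ge> 0" using bc2 q0 by auto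
  have sA3: "s + A 3 \<ge> 1" unfolding s_def using abs_ge_minus_self[of "A 3"] bc2 bc by linarith
  have "1 * inn \<le> (s + A 3) * inn"
  proof (rule mult_right_mono)
    show "0 \<le> inn" using inner' bq q0 by linarith
  qed (use sA3 in auto)
  moreover have "Pp (-s) = (s + A 3) * inn - B 2 * C 3 * q"
    unfolding Pp_def q_def inn_def by (simp add: algebra_simps)
  ultimately have Ps: "Pp (-s) > 0" using inner' q0 by linarith
  then show "\<exists>s. Pp s > 0" by blast
  define g where "g = (\<lambda>t::real. t*t - A 1 * t - K)"
  have "g (-s) = q" unfolding g_def q_def by simp
  have "\<exists>t. -s \<le> t \<and> t \<le> 0 \<and> g t = 0"
    by (rule IVT2) (use \<open>g (-s) = q\<close> q0 bc s1 in \<open>auto simp: g_def\<close>)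
  then obtain t0 where t0: "-s \<le> t0" "t0 \<le> 0" "g t0 = 0" by blast
  have "t0 \<noteq> 0" using t0(3) bc unfolding g_def by auto
  then have t0n: "t0 < 0" using t0 by auto
  have "Pp t0 = (t0 - A 3) * ((t0 - A 2) * g t0 - B 1 * C 2 * t0) - B 2 * C 3 * g t0"
    unfolding Pp_def g_def by simp
  then have "Pp t0 = - (B 1 * C 2) * ((t0 - A 3) * t0)" using t0(3) by (simp add: algebra_simps)
  moreover have "(t0 - A 3) * t0 > 0" using t0n a3_nonneg by (intro mult_neg_neg) auto
  moreover have "B 1 * C 2 > 0" using bc by auto
  ultimately have Pt0: "Pp t0 < 0" by (simp add: mult_pos_pos)
  have "\<exists>r. -s \<le> r \<and> r \<le> t0 \<and> Pp r = 0"
    by (rule IVT2) (use Pt0 Ps t0 Pp_cont in auto)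
  then obtain r where "r \<le> t0" "Pp r = 0" by blast
  then show "\<exists>r. r < 0 \<and> Pp r = 0" using t0n by (intro exI[of _ r]) simp
qed

lemma spectral: assumes "second_eigenvalue V E = A 3" shows "K = (A 3 - A 1) * A 3"
proof -
  define pp where "pp = [:-A 3, 1:] * ([:-A 2, 1:] * [:-K, -A 1, 1:] - [:0, B 1 * C 2:]) - smult (B 2 * C 3) [:-K, -A 1, 1:]"
  have pp: "poly pp t = Pp t" for t unfolding pp_def Pp_def by (rule poly_quart)
  obtain s where "Pp s > 0" using neg_root(1) by blast
  then have "pp \<noteq> 0" using pp[of s] by auto
  let ?eig = "eigenvalues V E"
  have "?eig \<subseteq> {t. poly pp t = 0}" unfolding eigenvalues_def using eig_P pp by auto
  then have fin: "finite ?eig" by (rule finite_subset[OF _ poly_roots_finite[OF \<open>pp \<noteq> 0\<close>]])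
  obtain r where r: "r < 0" "Pp r = 0" using neg_root(2) by blast
  have rE: "r \<in> ?eig" unfolding eigenvalues_def using root_eig[OF r(2)] by simp
  have KE: "K \<in> ?eig" unfolding eigenvalues_def using K_eig by simp
  have "r \<noteq> K" using r(1) of_nat_0_le_iff[of "b 0"] by linarith
  have ne: "?eig - {Max ?eig} \<noteq> {}"
  proof (cases "Max ?eig = K")
    case True
    then have "r \<in> ?eig - {Max ?eig}" using rE \<open>r \<noteq> K\<close> by simp
    then show ?thesis by blast
  next
    case False
    then have "K \<in> ?eig - {Max ?eig}" using KE by simp
    then show ?thesis by blast
  qed
  have "Max (?eig - {Max ?eig}) \<in> ?eig - {Max ?eig}" using fin ne by (intro Max_in) auto
  then have "A 3 \<in> ?eig" using assms unfolding second_eigenvalue_def by auto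
  then have "Pp (A 3) = 0" using eig_P unfolding eigenvalues_def by auto
  moreover have "Pp (A 3) = - (B 2 * C 3) * (A 3 * A 3 - A 1 * A 3 - K)" unfolding Pp_def by (rule quart_a3)
  moreover have "B 2 * C 3 > 0" using basics by auto
  ultimately have "B 2 * C 3 * (A 3 * A 3 - A 1 * A 3 - K) = 0" by simp
  then have "A 3 * A 3 - A 1 * A 3 - K = 0" using basics by (simp del: of_nat_mult)
  then show ?thesis by (simp add: algebra_simps)
qed

lemma card_filt: "card {w\<in>V. R w} = (\<Sum>w\<in>V. if R w then 1 else (0::nat))"
  using finV by (simp add: sum.inter_filter[symmetric])

lemma dc: "(\<Sum>z\<in>{z\<in>V. P z}. card {w\<in>V. E z w \<and> Q w}) = (\<Sum>w\<in>{w\<in>V. Q w}. card {z\<in>V. E w z \<and> P z})"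
proof -
  have "(\<Sum>z\<in>{z\<in>V. P z}. card {w\<in>V. E z w \<and> Q w})
      = (\<Sum>z\<in>V. if P z then card {w\<in>V. E z w \<and> Q w} else 0)"
    using finV by (simp add: sum.inter_filter)
  also have "\<dots> = (\<Sum>z\<in>V. \<Sum>w\<in>V. if P z \<and> E z w \<and> Q w then 1 else (0::nat))"
    unfolding card_filt by (intro sum.cong) auto
  also have "\<dots> = (\<Sum>w\<in>V. \<Sum>z\<in>V. if P z \<and> E z w \<and> Q w then 1 else (0::nat))"
    by (rule sum.swap)
  also have "\<dots> = (\<Sum>w\<in>V. if Q w then card {z\<in>V. E w z \<and> P z} else 0)"
    unfolding card_filt
  proof (intro sum.cong refl)
    fix w assume "w \<in> V"
    have "(\<Sum>z\<in>V. if P z \<and> E z w \<and> Q w then 1 else (0::nat)) =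
      (\<Sum>z\<in>V. if Q w then (if E w z \<and> P z then 1 else 0) else 0)"
    proof (intro sum.cong refl)
      fix z assume "z \<in> V"
      show "(if P z \<and> E z w \<and> Q w then 1 else (0::nat)) = (if Q w then (if E w z \<and> P z then 1 else 0) else 0)"
        using Esym[of z w] Esym[of w z] by auto
    qed
    then show "(\<Sum>z\<in>V. if P z \<and> E z w \<and> Q w then 1 else (0::nat)) =
      (if Q w then \<Sum>z\<in>V. if E w z \<and> P z then 1 else 0 else 0)"
      by (cases "Q w") simp_all
  qed
  also have "\<dots> = (\<Sum>w\<in>{w\<in>V. Q w}. card {z\<in>V. E w z \<and> P z})"
    using finV by (simp add: sum.inter_filter)
  finally show ?thesis .
qed

lemma kk: assumes "x \<in> V" "i \<le> 2"
  shows "card {z\<in>V. d x z = i + 1} * c (i + 1) = card {z\<in>V. d x z = i} * b i"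
proof -
  have "(\<Sum>z\<in>{z\<in>V. d x z = i}. card {w\<in>V. E z w \<and> d x w = i + 1}) =
        (\<Sum>w\<in>{w\<in>V. d x w = i + 1}. card {z\<in>V. E w z \<and> d x z = i})"
    by (rule dc)
  moreover have "(\<Sum>z\<in>{z\<in>V. d x z = i}. card {w\<in>V. E z w \<and> d x w = i + 1}) = (\<Sum>z\<in>{z\<in>V. d x z = i}. b i)"
    using cB[OF assms(1)] assms(2) by (intro sum.cong) auto
  moreover have "(\<Sum>w\<in>{w\<in>V. d x w = i + 1}. card {z\<in>V. E w z \<and> d x z = i}) = (\<Sum>w\<in>{w\<in>V. d x w = i + 1}. c (i + 1))"
  proof (intro sum.cong refl)
    fix w assume w: "w \<in> {w\<in>V. d x w = i + 1}"
    have "{z\<in>V. E w z \<and> d x z = i} = {z\<in>V. E w z \<and> d x z + 1 = i + 1}" by auto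
    moreover have "card {z\<in>V. E w z \<and> d x z + 1 = i + 1} = c (i + 1)"
      using cC[OF assms(1), of w "i+1"] w assms(2) by simp
    ultimately show "card {z\<in>V. E w z \<and> d x z = i} = c (i + 1)" by simp
  qed
  ultimately show ?thesis by (simp add: mult.commute)
qed

lemma k1: "x \<in> V \<Longrightarrow> card {z\<in>V. d x z = 1} = b 0"
proof -
  assume x: "x \<in> V"
  have "{z\<in>V. d x z = 1} = {z\<in>V. E x z}" using d1_iff[OF x] by blast
  then show ?thesis using deg[OF x] by simp
qed

lemma pair: assumes x: "x \<in> V" and y: "y \<in> V" and xy: "d x y = 3"
  shows "C 2 * real (card {w\<in>V. d x w = 2 \<and> d y w = 2}) = C 3 * (A 2 + A 3 - A 1)"
    and "real (card {z\<in>V. d x z = 3}) = 1 + A 3 + real (card {z\<in>V. d x z = 3 \<and> d y z = 2}) + real (p_num V E x y 3 3)"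
    and "real (card {z\<in>V. d y z = 2}) = C 3 + real (card {w\<in>V. d x w = 2 \<and> d y w = 2}) + real (card {z\<in>V. d x z = 3 \<and> d y z = 2})"
proof -
  have yx: "d y x = 3" using xy d_sym by metis
  let ?p22 = "{w\<in>V. d x w = 2 \<and> d y w = 2}"
  have dc1: "(\<Sum>z\<in>{z\<in>V. E y z}. card {w\<in>V. E z w \<and> d x w = 2}) = (\<Sum>w\<in>{w\<in>V. d x w = 2}. card {z\<in>V. E w z \<and> E y z})"
    by (rule dc)
  have "real (\<Sum>z\<in>{z\<in>V. E y z}. card {w\<in>V. E z w \<and> d x w = 2}) = (\<Sum>z\<in>{z\<in>V. E y z}. Nr (d x z) 2)"
    unfolding of_nat_sum using cN[OF x _ refl] by (intro sum.cong) auto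
  also have "\<dots> = (\<Sum>i\<in>{..3::nat}. Nr i 2 * Nr (d x y) i)" by (rule groupN[OF x y])
  also have "\<dots> = A 2 * C 3 + C 3 * A 3" unfolding sum4 xy Nr0 by simp
  finally have L: "real (\<Sum>z\<in>{z\<in>V. E y z}. card {w\<in>V. E z w \<and> d x w = 2}) = A 2 * C 3 + C 3 * A 3" .
  have "real (\<Sum>w\<in>{w\<in>V. d x w = 2}. card {z\<in>V. E w z \<and> E y z}) = (\<Sum>w\<in>{w\<in>V. d x w = 2}. Nr (d y w) 1)"
    unfolding of_nat_sum
  proof (intro sum.cong refl)
    fix w assume w: "w \<in> {w\<in>V. d x w = 2}"
    then have wV: "w \<in> V" by simp
    have "{z\<in>V. E w z \<and> E y z} = {z\<in>V. E y z \<and> d w z = 1}" using d1_iff[OF wV] by blast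
    then have "real (card {z\<in>V. E w z \<and> E y z}) = Nr (d w y) 1" using cN[OF wV y refl] by simp
    then show "real (card {z\<in>V. E w z \<and> E y z}) = Nr (d y w) 1" using d_sym by metis
  qed
  also have "\<dots> = (\<Sum>j\<in>{..3::nat}. \<Sum>w\<in>{w\<in>{w\<in>V. d x w = 2}. d y w = j}. Nr (d y w) 1)"
    using group3[of "{w\<in>V. d x w = 2}" y "\<lambda>w. Nr (d y w) 1"] finV y by auto
  also have "\<dots> = (\<Sum>j\<in>{..3::nat}. Nr j 1 * real (card {w\<in>V. d x w = 2 \<and> d y w = j}))"
    by (intro sum.cong) auto
  also have "\<dots> = A 1 * C 3 + C 2 * real (card ?p22)"
  proof -
    have e0: "{w\<in>V. d x w = 2 \<and> d y w = 0} = {}"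
    proof (intro equalityI subsetI)
      fix w assume "w \<in> {w\<in>V. d x w = 2 \<and> d y w = 0}"
      then have "w = y" "d x w = 2" using d_eq0[OF y, of w] by auto
      then show "w \<in> {}" using xy by simp
    qed simp
    have c0: "card {w\<in>V. d x w = 2 \<and> d y w = 0} = 0" unfolding e0 by simp
    have e1: "{w\<in>V. d x w = 2 \<and> d y w = 1} = {w\<in>V. E y w \<and> d x w = 2}" using d1_iff[OF y] by blast
    have c1: "real (card {w\<in>V. d x w = 2 \<and> d y w = 1}) = C 3" unfolding e1 using cN[OF x y xy] Nr0 by simp
    show ?thesis unfolding sum4 Nr0 using c0 c1 by simp
  qed
  finally have R: "real (\<Sum>w\<in>{w\<in>V. d x w = 2}. card {z\<in>V. E w z \<and> E y z}) = A 1 * C 3 + C 2 * real (card ?p22)" .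
  from L R dc1 have "A 2 * C 3 + C 3 * A 3 = A 1 * C 3 + C 2 * real (card ?p22)" by simp
  then show "C 2 * real (card ?p22) = C 3 * (A 2 + A 3 - A 1)" by (simp add: algebra_simps)
next
  have "real (card {z\<in>V. d x z = 3}) = (\<Sum>z\<in>{z\<in>V. d x z = 3}. 1)" by simp
  also have "\<dots> = (\<Sum>j\<in>{..3::nat}. \<Sum>z\<in>{z\<in>{z\<in>V. d x z = 3}. d y z = j}. 1)"
    using group3[of "{z\<in>V. d x z = 3}" y "\<lambda>_. 1::real"] finV y by auto
  also have "\<dots> = (\<Sum>j\<in>{..3::nat}. real (card {z\<in>V. d x z = 3 \<and> d y z = j}))"
    by (intro sum.cong) auto
  also have "\<dots> = 1 + A 3 + real (card {z\<in>V. d x z = 3 \<and> d y z = 2}) + real (p_num V E x y 3 3)"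
  proof -
    have "{z\<in>V. d x z = 3 \<and> d y z = 0} = {y}"
    proof (intro equalityI subsetI)
      fix z assume "z \<in> {z\<in>V. d x z = 3 \<and> d y z = 0}"
      then show "z \<in> {y}" using d_eq0[OF y, of z] by auto
    qed (use y xy d_refl in auto)
    moreover have "{z\<in>V. d x z = 3 \<and> d y z = 1} = {z\<in>V. E y z \<and> d x z = 3}" using d1_iff[OF y] by blast
    moreover have "real (card {z\<in>V. E y z \<and> d x z = 3}) = A 3" using cN[OF x y xy] Nr0 by simp
    ultimately show ?thesis unfolding sum4 p_num_def by simp
  qed
  finally show "real (card {z\<in>V. d x z = 3}) = 1 + A 3 + real (card {z\<in>V. d x z = 3 \<and> d y z = 2}) + real (p_num V E x y 3 3)" .
next
  have yx: "d y x = 3" using xy d_sym by metis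
  have "real (card {z\<in>V. d y z = 2}) = (\<Sum>z\<in>{z\<in>V. d y z = 2}. 1)" by simp
  also have "\<dots> = (\<Sum>j\<in>{..3::nat}. \<Sum>z\<in>{z\<in>{z\<in>V. d y z = 2}. d x z = j}. 1)"
    using group3[of "{z\<in>V. d y z = 2}" x "\<lambda>_. 1::real"] finV x by auto
  also have "\<dots> = (\<Sum>j\<in>{..3::nat}. real (card {z\<in>V. d y z = 2 \<and> d x z = j}))"
    by (intro sum.cong) auto
  also have "\<dots> = C 3 + real (card {w\<in>V. d x w = 2 \<and> d y w = 2}) + real (card {z\<in>V. d x z = 3 \<and> d y z = 2})"
  proof -
    have e0: "{z\<in>V. d y z = 2 \<and> d x z = 0} = {}"
    proof (intro equalityI subsetI)
      fix w assume "w \<in> {z\<in>V. d y z = 2 \<and> d x z = 0}"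
      then have "w = x" "d y w = 2" using d_eq0[OF x, of w] by auto
      then show "w \<in> {}" using yx by simp
    qed simp
    have c0: "card {z\<in>V. d y z = 2 \<and> d x z = 0} = 0" unfolding e0 by simp
    have e1: "{z\<in>V. d y z = 2 \<and> d x z = 1} = {z\<in>V. E x z \<and> d y z = 2}" using d1_iff[OF x] by blast
    have c1: "real (card {z\<in>V. d y z = 2 \<and> d x z = 1}) = C 3" unfolding e1 using cN[OF y x yx] Nr0 by simp
    have e2: "{z\<in>V. d y z = 2 \<and> d x z = 2} = {w\<in>V. d x w = 2 \<and> d y w = 2}" by blast
    have e3: "{z\<in>V. d y z = 2 \<and> d x z = 3} = {z\<in>V. d x z = 3 \<and> d y z = 2}" by blast
    show ?thesis unfolding sum4 e2 e3 using c0 c1 by simp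
  qed
  finally show "real (card {z\<in>V. d y z = 2}) = C 3 + real (card {w\<in>V. d x w = 2 \<and> d y w = 2}) + real (card {z\<in>V. d x z = 3 \<and> d y z = 2})" .
qed

lemma pair_int: assumes spec: "int (b 0) = (a_num b c 3 - a_num b c 1) * a_num b c 3"
  and x: "x \<in> V" and y: "y \<in> V" and xy: "d x y = 3"
  shows "((a_num b c 3 - a_num b c 1) + a_num b c 3) * int (b 2) = int (c 2) * (int (p_num V E x y 3 3) + 1 + a_num b c 3)"
    and "(a_num b c 3 - a_num b c 1) * (a_num b c 3 + 1) * int (b 2) = int (c 2) * int (card {z\<in>V. d x z = 3})"
    and "((a_num b c 3 - a_num b c 1) - 1) * (a_num b c 3 - a_num b c 1) * a_num b c 3 * (a_num b c 3 + 1) = int (c 2) * int (card {z\<in>V. d x z = 2})"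
    and "((a_num b c 3 - a_num b c 1) - 1) * a_num b c 3 * int (b 2) = int (c 2) * (int (card {z\<in>V. d x z = 2}) - int (card {w\<in>V. d x w = 2 \<and> d y w = 2}) - int (c 3))"
    and "((a_num b c 3 - a_num b c 1) - 1) * (a_num b c 3 - a_num b c 1) * int (b 2) = int (c 2) * (((a_num b c 3 - a_num b c 1) - 1) * (int (p_num V E x y 3 3) + 1 + a_num b c 3) - (int (card {z\<in>V. d x z = 2}) - int (card {w\<in>V. d x w = 2 \<and> d y w = 2}) - int (c 3)))"
proof -
  have yx: "d y x = 3" using xy d_sym by metis
  have hA1: "a_num b c 1 = int (b 0) - 1 - int (b 1)" using basics unfolding a_num_def by simp
  have hA2: "a_num b c 2 = int (b 0) - int (b 2) - int (c 2)" unfolding a_num_def by simp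
  have hA3: "int (c 3) = int (b 0) - a_num b c 3" using basics unfolding a_num_def by simp
  have n1: "card {z\<in>V. d x z = 2} * c 2 = b 0 * b 1" using kk[OF x, of 1] k1[OF x] by (simp add: numeral_2_eq_2)
  have i1: "int (card {z\<in>V. d x z = 2}) * int (c 2) = int (b 0) * int (b 1)"
    using arg_cong[OF n1, of int] by simp
  have n2: "card {z\<in>V. d y z = 2} * c 2 = b 0 * b 1" using kk[OF y, of 1] k1[OF y] by (simp add: numeral_2_eq_2)
  have i2: "int (card {z\<in>V. d y z = 2}) * int (c 2) = int (b 0) * int (b 1)"
    using arg_cong[OF n2, of int] by simp
  have n3: "card {z\<in>V. d x z = 3} * c 3 = card {z\<in>V. d x z = 2} * b 2" using kk[OF x, of 2] by (simp add: numeral_2_eq_2 numeral_3_eq_3)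
  have i3: "int (card {z\<in>V. d x z = 3}) * int (c 3) = int (card {z\<in>V. d x z = 2}) * int (b 2)"
    using arg_cong[OF n3, of int] by simp
  have "real_of_int (int (c 2) * int (card {w\<in>V. d x w = 2 \<and> d y w = 2})) =
        real_of_int (int (c 3) * (a_num b c 2 + a_num b c 3 - a_num b c 1))"
    using pair(1)[OF x y xy] by simp
  then have i4: "int (c 2) * int (card {w\<in>V. d x w = 2 \<and> d y w = 2}) = int (c 3) * (a_num b c 2 + a_num b c 3 - a_num b c 1)"
    by (simp only: of_int_eq_iff)
  have "real_of_int (int (card {z\<in>V. d x z = 3})) = real_of_int (1 + a_num b c 3 + int (card {z\<in>V. d x z = 3 \<and> d y z = 2}) + int (p_num V E x y 3 3))"
    using pair(2)[OF x y xy] by simp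
  then have i5: "int (card {z\<in>V. d x z = 3}) = 1 + a_num b c 3 + int (card {z\<in>V. d x z = 3 \<and> d y z = 2}) + int (p_num V E x y 3 3)"
    by (simp only: of_int_eq_iff)
  have "real_of_int (int (card {z\<in>V. d y z = 2})) = real_of_int (int (c 3) + int (card {w\<in>V. d x w = 2 \<and> d y w = 2}) + int (card {z\<in>V. d x z = 3 \<and> d y z = 2}))"
    using pair(3)[OF x y xy] by simp
  then have i6: "int (card {z\<in>V. d y z = 2}) = int (c 3) + int (card {w\<in>V. d x w = 2 \<and> d y w = 2}) + int (card {z\<in>V. d x z = 3 \<and> d y z = 2})"
    by (simp only: of_int_eq_iff)
  have c3: "int (c 3) \<noteq> 0" using basics by simp
  have hb: "a_num b c 1 = a_num b c 3 - (a_num b c 3 - a_num b c 1)" by simp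
  have hA1': "int (b 1) = int (b 0) - 1 - a_num b c 1" using hA1 by simp
  note A = alg_all[of "int (b 0)" "a_num b c 3 - a_num b c 1" "a_num b c 3" "a_num b c 1" "int (b 1)"
    "a_num b c 2" "int (b 2)" "int (c 2)" "int (c 3)" "int (card {z\<in>V. d x z = 2})"
    "int (card {z\<in>V. d y z = 2})" "int (card {z\<in>V. d x z = 3})"
    "int (card {w\<in>V. d x w = 2 \<and> d y w = 2})" "int (card {z\<in>V. d x z = 3 \<and> d y z = 2})"
    "int (p_num V E x y 3 3)", OF spec hb hA1' hA2 hA3 i1 i2 i3 i4 i5 i6 c3]
  show "((a_num b c 3 - a_num b c 1) + a_num b c 3) * int (b 2) = int (c 2) * (int (p_num V E x y 3 3) + 1 + a_num b c 3)"
    by (rule A(1))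
  show "(a_num b c 3 - a_num b c 1) * (a_num b c 3 + 1) * int (b 2) = int (c 2) * int (card {z\<in>V. d x z = 3})"
    by (rule A(2))
  show "((a_num b c 3 - a_num b c 1) - 1) * (a_num b c 3 - a_num b c 1) * a_num b c 3 * (a_num b c 3 + 1) = int (c 2) * int (card {z\<in>V. d x z = 2})"
    by (rule A(3))
  show "((a_num b c 3 - a_num b c 1) - 1) * a_num b c 3 * int (b 2) = int (c 2) * (int (card {z\<in>V. d x z = 2}) - int (card {w\<in>V. d x w = 2 \<and> d y w = 2}) - int (c 3))"
    by (rule A(4))
  show "((a_num b c 3 - a_num b c 1) - 1) * (a_num b c 3 - a_num b c 1) * int (b 2) = int (c 2) * (((a_num b c 3 - a_num b c 1) - 1) * (int (p_num V E x y 3 3) + 1 + a_num b c 3) - (int (card {z\<in>V. d x z = 2}) - int (card {w\<in>V. d x w = 2 \<and> d y w = 2}) - int (c 3)))"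
    by (rule A(5))
qed

end

theorem lemma10:
  fixes V :: "'a set" and E :: "'a \<Rightarrow> 'a \<Rightarrow> bool" and b c :: "nat \<Rightarrow> nat" and bG :: int
  assumes "shilla V E b c"
    and "bG = a_num b c 3 - a_num b c 1"
  shows "int (c 2) dvd (bG - 1) * a_num b c 3 * int (b 2) \<and>
    int (c 2) dvd (bG - 1) * bG * a_num b c 3 * (a_num b c 3 + 1) \<and>
    int (c 2) dvd bG * (a_num b c 3 + 1) * int (b 2) \<and>
    int (c 2) dvd (bG + a_num b c 3) * int (b 2) \<and>
    (bG + a_num b c 3) * int (b 2) \<ge> (1 + a_num b c 3) * int (c 2) \<and>
    (\<forall>x\<in>V. \<forall>y\<in>V. gdist E x y = 3 \<longrightarrow>
       ((bG + a_num b c 3) * int (b 2) = (1 + a_num b c 3) * int (c 2)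
        \<longleftrightarrow> p_num V E x y 3 3 = 0)) \<and>
    int (c 2) dvd (bG - 1) * bG * int (b 2)"
proof -
  interpret drg3 V E b c by unfold_locales (use assms(1) in \<open>simp add: shilla_def\<close>)
  have sec: "second_eigenvalue V E = A 3" using assms(1) unfolding shilla_def by simp
  have "real_of_int (int (b 0)) = real_of_int ((a_num b c 3 - a_num b c 1) * a_num b c 3)"
    using spectral[OF sec] by simp
  then have spec: "int (b 0) = (a_num b c 3 - a_num b c 1) * a_num b c 3" by (simp only: of_int_eq_iff)
  note P = pair_int[OF spec]
  obtain x y where xy: "x \<in> V" "y \<in> V" "gdist E x y = 3" using exists3 by auto
  have c2: "int (c 2) > 0" using basics by simp
  have d1: "int (c 2) dvd (bG - 1) * a_num b c 3 * int (b 2)"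
    using P(4)[OF xy] unfolding assms(2) by (rule dvdI)
  have d2: "int (c 2) dvd (bG - 1) * bG * a_num b c 3 * (a_num b c 3 + 1)"
    using P(3)[OF xy] unfolding assms(2) by (rule dvdI)
  have d3: "int (c 2) dvd bG * (a_num b c 3 + 1) * int (b 2)"
    using P(2)[OF xy] unfolding assms(2) by (rule dvdI)
  have e4: "(bG + a_num b c 3) * int (b 2) = int (c 2) * (int (p_num V E x y 3 3) + 1 + a_num b c 3)"
    using P(1)[OF xy] assms(2) by simp
  have d4: "int (c 2) dvd (bG + a_num b c 3) * int (b 2)" using e4 by (intro dvdI)
  have "int (c 2) * (1 + a_num b c 3) \<le> int (c 2) * (int (p_num V E x y 3 3) + 1 + a_num b c 3)"
    by (rule mult_left_mono) (use c2 in auto)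
  then have ineq: "(bG + a_num b c 3) * int (b 2) \<ge> (1 + a_num b c 3) * int (c 2)"
    using e4 by (simp add: mult.commute)
  have iff: "\<forall>x\<in>V. \<forall>y\<in>V. gdist E x y = 3 \<longrightarrow>
       ((bG + a_num b c 3) * int (b 2) = (1 + a_num b c 3) * int (c 2) \<longleftrightarrow> p_num V E x y 3 3 = 0)"
  proof (intro ballI impI)
    fix x y assume x: "x \<in> V" and y: "y \<in> V" and d: "gdist E x y = 3"
    have e: "(bG + a_num b c 3) * int (b 2) = int (c 2) * (int (p_num V E x y 3 3) + 1 + a_num b c 3)"
      using P(1)[OF x y d] assms(2) by simp
    have "int (c 2) * (int (p_num V E x y 3 3) + 1 + a_num b c 3) = (1 + a_num b c 3) * int (c 2)
          \<longleftrightarrow> int (c 2) * int (p_num V E x y 3 3) = 0"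
      by (simp add: algebra_simps)
    also have "\<dots> \<longleftrightarrow> p_num V E x y 3 3 = 0" using c2 by simp
    finally show "(bG + a_num b c 3) * int (b 2) = (1 + a_num b c 3) * int (c 2) \<longleftrightarrow> p_num V E x y 3 3 = 0"
      unfolding e .
  qed
  have d5: "int (c 2) dvd (bG - 1) * bG * int (b 2)"
    using P(5)[OF xy] unfolding assms(2) by (rule dvdI)
  show ?thesis using d1 d2 d3 d4 ineq iff d5 by blast
qed

end
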